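(* Let $\Delta\ge 4$ be an integer and for positive integers $i,j$ define \[ F(i,j)=(4\Delta-6)\Bigl(\frac{1}{i}+\frac{1}{j}\Bigr)+\Delta^2-6\Delta+3+\frac{6}{\Delta}-(i-j)^2 . \] Then for every integer $i$ with $3\le i\le \left\lfloor \frac{\Delta+3}{2}\right\rfloor$ we have the strict inequality \[ (\Delta-1)\,F(i,\Delta) > F(\Delta,\Delta). \] *)

theory Defs
  imports Complex_Main
begin

definition F :: "int \<Rightarrow> int \<Rightarrow> int \<Rightarrow> real" where
  "F D i j = (4 * real_of_int D - 6) * (1 / real_of_int i + 1 / real_of_int j)
     + (real_of_int D)^2 - 6 * real_of_int D + 3 + 6 / real_of_int D
     - (real_of_int i - real_of_int j)^2"

end

theory Submission
  imports Defs
begin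

theorem lemma4p3:
  fixes D i :: int
  assumes "D \<ge> 4"
    and "3 \<le> i" and "i \<le> \<lfloor>(real_of_int D + 3) / 2\<rfloor>"
  shows "(real_of_int D - 1) * F D i D > F D D D"
proof -
  define d where "d = real_of_int D"
  define x where "x = real_of_int i"
  have d4: "d \<ge> 4" using assms(1) by (simp add: d_def)
  have x3: "x \<ge> 3" using assms(2) by (simp add: x_def)
  have xle: "x \<le> (d + 3) / 2" using assms(3) unfolding x_def d_def
    by (meson le_floor_iff)
  have FD: "F D D D = d^2 - 6*d + 11 - 6/d"
    using d4 unfolding F_def d_def[symmetric] by (simp add: field_simps power2_eq_square)
  have Fi: "F D i D = (4*d-6)/x + 4 - 6/d + d^2 - 6*d + 3 + 6/d - (x-d)^2"
    using d4 x3 unfolding F_def d_def[symmetric] x_def[symmetric] by (simp add: field_simps)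
  have a: "2*d - x - 3 \<ge> (3*d-9)/2" using xle by simp
  have b: "3*x*(2*d-x-3) \<ge> 9*((3*d-9)/2)"
  proof -
    have n1: "9 \<le> 3*x" using x3 by simp
    have n2: "(3*d-9)/2 \<ge> 0" using d4 by simp
    have "9*((3*d-9)/2) \<le> (3*x)*(2*d-x-3)" using mult_mono[OF n1 a] n2 x3 by simp
    then show ?thesis by simp
  qed
  have c: "(x-3)*(3*x*(2*d-x-3) - (4*d-6)) \<ge> 0" using b x3 d4 by simp
  have g: "(4*d-6)/x + 2*d*x - x^2 - 6*d + 7 \<ge> (4*d-12)/3"
  proof -
    have "(4*d-6)*3 + 3*x*(2*d*x - x^2 - 6*d + 7) - x*(4*d-12) = (x-3)*(3*x*(2*d-x-3) - (4*d-6))"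
      by (simp add: algebra_simps power2_eq_square)
    with c have "(4*d-6)*3 + 3*x*(2*d*x - x^2 - 6*d + 7) \<ge> x*(4*d-12)" by linarith
    then show ?thesis using x3 by (simp add: field_simps)
  qed
  have Fi2: "F D i D = (4*d-6)/x + 2*d*x - x^2 - 6*d + 7"
    unfolding Fi by (simp add: power2_eq_square algebra_simps)
  have h: "(d-1)*((4*d-12)/3) > d^2 - 6*d + 11 - 6/d"
  proof -
    have "d^3 + 2*d^2 - 21*d + 18 > 0"
    proof -
      have "d^3 \<ge> 4*d^2" using d4 by (simp add: power2_eq_square power3_eq_cube)
      moreover have "d^2 \<ge> 4*d" using d4 by (simp add: power2_eq_square)
      ultimately show ?thesis using d4 by linarith
    qed
    then have "3*d*((d-1)*((4*d-12)/3)) > 3*d*(d^2 - 6*d + 11 - 6/d)"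
      using d4 by (simp add: algebra_simps power2_eq_square power3_eq_cube)
    then show ?thesis using d4 by simp
  qed
  have "(d-1)*F D i D \<ge> (d-1)*((4*d-12)/3)"
    unfolding Fi2 using g d4 by (intro mult_left_mono) auto
  then show ?thesis using h FD unfolding d_def by linarith
qed

end
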